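(* For every $q\in\mathbb{K}$, $(\mathcal{M}MR(q),\succ_q,\cdot_q,\prec_q)$ is a $q$-tridendriform algebra.
   Context: An $\mathcal M$-permutation (big multi-permutation) of $n$ is an ordered sequence $B=(B_1,\dots,B_m)$ of nonempty pairwise disjoint subsets of $[n]$ with union $[n]$ such that for every $1\le i\le n-1$, $i$ and $i+1$ do not lie in the same block. $S^{\mathcal M}_n$ is their set and $\mathcal MMR=\bigoplus_{n\ge1}\mathbb{K}[S^{\mathcal M}_n]$. Restriction: for an ordered set partition $W=(W_1,\dots,W_l)$ and a set $J$, $W|_J$ is $(W_1\cap J,\dots,W_l\cap J)$ with empty blocks deleted. $\mathcal M$-standardization: for an ordered sequence $C=(C_1,\dots,C_p)$ of nonempty pairwise disjoint finite subsets of $\mathbb{Z}_{>0}$, let $s_1<\dots<s_k$ be the elements of $\bigcup C_c$, let $w$ be the word with $w(t)=c$ iff $s_t\in C_c$, let $w'$ (of length $l$) be obtained from $w$ by deleting every letter equal to the letter immediately preceding it; then $\mathrm{std}_{\mathcal M}(C)=(w'^{-1}(1),\dots,w'^{-1}(p))\in S^{\mathcal M}_l$. (E.g. $\mathrm{std}_{\mathcal M}[(1,6,7),(2,3),5,4]=[(1,5),2,4,3]$, $\mathrm{std}_{\mathcal M}[(1,3)]=[1]$.) Products: let $B\in S^{\mathcal M}_n$, $D\in S^{\mathcal M}_m$. Let $\mathcal W(B,D)$ be the set of pairs $(W,S)$ where either (I) $W\in S^{\mathcal M}_{n+m}$, $S=\{n+1,\dots,n+m\}$, or (II) $W\in S^{\mathcal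 M}_{n+m-1}$, $S=\{n,\dots,n+m-1\}$, and in both cases $W|_{[n]}=B$ and $\mathrm{std}_{\mathcal M}(W|_S)=D$. For $W=(W_1,\dots,W_l)$ let $\cap^W_{B,D}$ be the number of blocks $W_j$ with $W_j\cap[n]\neq\emptyset$ and $W_j\cap S\neq\emptyset$. Then $B\succ_qD=\sum q^{\cap^W_{B,D}}W$ over $(W,S)\in\mathcal W(B,D)$ with $W_l\cap[n]=\emptyset$; $B\cdot_qD=\sum q^{\cap^W_{B,D}-1}W$ over those with $W_l\cap[n]\ne\emptyset$ and $W_l\cap S\ne\emptyset$; $B\prec_qD=\sum q^{\cap^W_{B,D}}W$ over those with $W_l\cap S=\emptyset$. $\mathcal MMR(q)$ denotes $\mathcal MMR$ with these products. $q$-tridendriform algebra: bilinear $\prec,\cdot,\succ$ with (1) $(a\prec b)\prec c=a\prec(b\prec c+b\succ c+q\,b\cdot c)$; (2) $(a\succ b)\prec c=a\succ(b\prec c)$; (3) $(a\prec b+a\succ b+q\,a\cdot b)\succ c=a\succ(b\succ c)$; (4) $(a\cdot b)\cdot c=a\cdot(b\cdot c)$; (5) $(a\succ b)\cdot c=a\succ(b\cdot c)$; (6) $(a\prec b)\cdot c=a\cdot(b\succ c)$; (7) $(a\cdot b)\prec c=a\cdot(b\prec c)$. *)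

theory Defs
  imports Main
begin

definition Mperm :: "nat \<Rightarrow> nat set list \<Rightarrow> bool" where
  "Mperm n B \<longleftrightarrow>
     (\<forall>X\<in>set B. X \<noteq> {}) \<and>
     (\<forall>i<length B. \<forall>j<length B. i \<noteq> j \<longrightarrow> B ! i \<inter> B ! j = {}) \<and>
     \<Union>(set B) = {1..n} \<and>
     (\<forall>i. 1 \<le> i \<and> i < n \<longrightarrow> \<not> (\<exists>X\<in>set B. i \<in> X \<and> Suc i \<in> X))"

definition restr :: "nat set list \<Rightarrow> nat set \<Rightarrow> nat set list" where
  "restr W J = filter (\<lambda>X. X \<noteq> {}) (map (\<lambda>X. X \<inter> J) W)"

fun destutter :: "nat list \<Rightarrow> nat list" where
  "destutter [] = []"
| "destutter [x] = [x]"
| "destutter (x # y # xs) =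
     (if x = y then destutter (y # xs) else x # destutter (y # xs))"

definition blk_idx :: "nat set list \<Rightarrow> nat \<Rightarrow> nat" where
  "blk_idx C s = (THE c. c < length C \<and> s \<in> C ! c)"

definition stdM :: "nat set list \<Rightarrow> nat set list" where
  "stdM C = (let w = map (blk_idx C) (sorted_list_of_set (\<Union>(set C)));
                 w' = destutter w
             in map (\<lambda>c. {t. 1 \<le> t \<and> t \<le> length w' \<and> w' ! (t - 1) = c}) [0..<length C])"

definition msize :: "nat set list \<Rightarrow> nat" where
  "msize B = card (\<Union>(set B))"

definition admissible :: "nat set list \<Rightarrow> nat set list \<Rightarrow> nat set list \<Rightarrow> nat \<Rightarrow> nat set \<Rightarrow> bool" where
  "admissible B D W N S \<longleftrightarrow>
     Mperm N W \<and> restr W {1..msize B} = B \<and> stdM (restr W S) = D"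

definition capn :: "nat set list \<Rightarrow> nat set list \<Rightarrow> nat set \<Rightarrow> nat" where
  "capn B W S = card {j. j < length W \<and> W ! j \<inter> {1..msize B} \<noteq> {} \<and> W ! j \<inter> S \<noteq> {}}"

definition Sset_I :: "nat set list \<Rightarrow> nat set list \<Rightarrow> nat set" where
  "Sset_I B D = {msize B + 1 .. msize B + msize D}"
definition Sset_II :: "nat set list \<Rightarrow> nat set list \<Rightarrow> nat set" where
  "Sset_II B D = {msize B .. msize B + msize D - 1}"

(* generic coefficient of W in a product of basis elements B and D:
   cond selects the condition on the last block, ex gives the exponent *)
definition coef_gen ::
  "(nat set list \<Rightarrow> nat set list \<Rightarrow> nat set \<Rightarrow> bool) \<Rightarrow> (nat \<Rightarrow> nat) \<Rightarrow> 'k::field \<Rightarrow>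
   nat set list \<Rightarrow> nat set list \<Rightarrow> nat set list \<Rightarrow> 'k" where
  "coef_gen cond ex q B D W =
     (if admissible B D W (msize B + msize D) (Sset_I B D) \<and> cond B W (Sset_I B D)
      then q ^ ex (capn B W (Sset_I B D)) else 0) +
     (if admissible B D W (msize B + msize D - 1) (Sset_II B D) \<and> cond B W (Sset_II B D)
      then q ^ ex (capn B W (Sset_II B D)) else 0)"

definition cond_succ :: "nat set list \<Rightarrow> nat set list \<Rightarrow> nat set \<Rightarrow> bool" where
  "cond_succ B W S \<longleftrightarrow> last W \<inter> {1..msize B} = {}"
definition cond_dot :: "nat set list \<Rightarrow> nat set list \<Rightarrow> nat set \<Rightarrow> bool" where
  "cond_dot B W S \<longleftrightarrow> last W \<inter> {1..msize B} \<noteq> {} \<and> last W \<inter> S \<noteq> {}"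
definition cond_prec :: "nat set list \<Rightarrow> nat set list \<Rightarrow> nat set \<Rightarrow> bool" where
  "cond_prec B W S \<longleftrightarrow> last W \<inter> S = {}"

(* elements of MMR: finitely supported K-valued functions on M-permutations of n >= 1 *)
definition supp :: "(nat set list \<Rightarrow> 'k::zero) \<Rightarrow> nat set list set" where
  "supp x = {B. x B \<noteq> 0}"

definition in_MMR :: "(nat set list \<Rightarrow> 'k::field) \<Rightarrow> bool" where
  "in_MMR x \<longleftrightarrow> finite (supp x) \<and> (\<forall>B\<in>supp x. \<exists>n\<ge>1. Mperm n B)"

definition bilin ::
  "(nat set list \<Rightarrow> nat set list \<Rightarrow> nat set list \<Rightarrow> 'k::field) \<Rightarrow>
   (nat set list \<Rightarrow> 'k) \<Rightarrow> (nat set list \<Rightarrow> 'k) \<Rightarrow> (nat set list \<Rightarrow> 'k)" where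
  "bilin f x y = (\<lambda>W. \<Sum>B\<in>supp x. \<Sum>D\<in>supp y. x B * y D * f B D W)"

definition succ_q :: "'k::field \<Rightarrow> (nat set list \<Rightarrow> 'k) \<Rightarrow> (nat set list \<Rightarrow> 'k) \<Rightarrow> (nat set list \<Rightarrow> 'k)" where
  "succ_q q = bilin (coef_gen cond_succ (\<lambda>c. c) q)"
definition dot_q :: "'k::field \<Rightarrow> (nat set list \<Rightarrow> 'k) \<Rightarrow> (nat set list \<Rightarrow> 'k) \<Rightarrow> (nat set list \<Rightarrow> 'k)" where
  "dot_q q = bilin (coef_gen cond_dot (\<lambda>c. c - 1) q)"
definition prec_q :: "'k::field \<Rightarrow> (nat set list \<Rightarrow> 'k) \<Rightarrow> (nat set list \<Rightarrow> 'k) \<Rightarrow> (nat set list \<Rightarrow> 'k)" where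
  "prec_q q = bilin (coef_gen cond_prec (\<lambda>c. c) q)"

definition vadd :: "(nat set list \<Rightarrow> 'k::field) \<Rightarrow> (nat set list \<Rightarrow> 'k) \<Rightarrow> (nat set list \<Rightarrow> 'k)" where
  "vadd x y = (\<lambda>W. x W + y W)"
definition vsmul :: "'k::field \<Rightarrow> (nat set list \<Rightarrow> 'k) \<Rightarrow> (nat set list \<Rightarrow> 'k)" where
  "vsmul c x = (\<lambda>W. c * x W)"

definition q_tridendriform ::
  "'k::field \<Rightarrow> ('v \<Rightarrow> bool) \<Rightarrow> ('v \<Rightarrow> 'v \<Rightarrow> 'v) \<Rightarrow> ('k \<Rightarrow> 'v \<Rightarrow> 'v) \<Rightarrow>
   ('v \<Rightarrow> 'v \<Rightarrow> 'v) \<Rightarrow> ('v \<Rightarrow> 'v \<Rightarrow> 'v) \<Rightarrow> ('v \<Rightarrow> 'v \<Rightarrow> 'v) \<Rightarrow> bool" where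
  "q_tridendriform q A add smul prec dot succ \<longleftrightarrow>
     (\<forall>a b c. A a \<and> A b \<and> A c \<longrightarrow>
        prec (prec a b) c = prec a (add (add (prec b c) (succ b c)) (smul q (dot b c))) \<and>
        prec (succ a b) c = succ a (prec b c) \<and>
        succ (add (add (prec a b) (succ a b)) (smul q (dot a b))) c = succ a (succ b c) \<and>
        dot (dot a b) c = dot a (dot b c) \<and>
        dot (succ a b) c = succ a (dot b c) \<and>
        dot (prec a b) c = dot a (succ b c) \<and>
        prec (dot a b) c = dot a (prec b c))"

end

theory Submission
  imports Defs
begin


definition dlist :: "nat set list \<Rightarrow> bool" where
  "dlist C \<longleftrightarrow> (\<forall>X\<in>set C. X \<noteq> {}) \<and>
     (\<forall>i<length C. \<forall>j<length C. i \<noteq> j \<longrightarrow> C ! i \<inter> C ! j = {})"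

lemma dlist_Nil[simp]: "dlist []" by (simp add: dlist_def)

lemma dlist_Cons: "dlist (X # C) \<longleftrightarrow> X \<noteq> {} \<and> (\<forall>Y\<in>set C. X \<inter> Y = {}) \<and> dlist C"
proof
  assume d: "dlist (X # C)"
  have "X \<noteq> {}" using d by (simp add: dlist_def)
  moreover have "\<forall>Y\<in>set C. X \<inter> Y = {}"
  proof
    fix Y assume "Y \<in> set C"
    then obtain j where j: "j < length C" "C ! j = Y" by (auto simp: in_set_conv_nth)
    have "(X#C) ! 0 \<inter> (X#C) ! Suc j = {}" using d j unfolding dlist_def
      by (intro d[unfolded dlist_def, THEN conjunct2, rule_format]) auto
    thus "X \<inter> Y = {}" using j by simp
  qed
  moreover have "dlist C" unfolding dlist_def
  proof (intro conjI allI impI ballI)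
    fix Y assume "Y \<in> set C" thus "Y \<noteq> {}" using d by (auto simp: dlist_def)
  next
    fix i j assume "i < length C" "j < length C" "i \<noteq> j"
    then have "(X#C) ! Suc i \<inter> (X#C) ! Suc j = {}"
      by (intro d[unfolded dlist_def, THEN conjunct2, rule_format]) auto
    thus "C ! i \<inter> C ! j = {}" by simp
  qed
  ultimately show "X \<noteq> {} \<and> (\<forall>Y\<in>set C. X \<inter> Y = {}) \<and> dlist C" by blast
next
  assume h: "X \<noteq> {} \<and> (\<forall>Y\<in>set C. X \<inter> Y = {}) \<and> dlist C"
  show "dlist (X # C)" unfolding dlist_def
  proof (intro conjI allI impI)
    show "\<forall>Z\<in>set (X # C). Z \<noteq> {}" using h by (auto simp: dlist_def)
  next
    fix i j assume ij: "i < length (X#C)" "j < length (X#C)" "i \<noteq> j"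
    show "(X#C) ! i \<inter> (X#C) ! j = {}"
    proof (cases i)
      case 0
      then obtain j' where "j = Suc j'" using ij by (cases j) auto
      thus ?thesis using h ij 0 by auto
    next
      case (Suc i')
      show ?thesis
      proof (cases j)
        case 0 thus ?thesis using h ij Suc by auto
      next
        case (Suc j') thus ?thesis using h ij \<open>i = Suc i'\<close> unfolding dlist_def by auto
      qed
    qed
  qed
qed

lemma restr_Nil[simp]: "restr [] J = []" by (simp add: restr_def)
lemma restr_Cons: "restr (X # W) J = (if X \<inter> J = {} then restr W J else (X \<inter> J) # restr W J)"
  by (simp add: restr_def)
lemma restr_append: "restr (xs @ ys) J = restr xs J @ restr ys J"
  by (simp add: restr_def)

lemma set_restr: "Y \<in> set (restr W J) \<Longrightarrow> \<exists>X\<in>set W. Y = X \<inter> J \<and> Y \<noteq> {}"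
  by (auto simp: restr_def)

lemma Union_restr: "\<Union>(set (restr W J)) = \<Union>(set W) \<inter> J"
  by (induction W) (auto simp: restr_Cons)

lemma dlist_restr: "dlist W \<Longrightarrow> dlist (restr W J)"
proof (induction W)
  case Nil thus ?case by simp
next
  case (Cons X W)
  have "\<forall>Y\<in>set (restr W J). X \<inter> J \<inter> Y = {}"
    using Cons.prems by (auto simp: dlist_Cons dest!: set_restr)
  thus ?case using Cons by (auto simp: restr_Cons dlist_Cons)
qed

lemma restr_restr: "restr (restr W J) K = restr W (J \<inter> K)"
  by (induction W) (auto simp: restr_Cons Int_assoc)

lemma restr_id: "\<forall>X\<in>set W. X \<noteq> {} \<Longrightarrow> \<Union>(set W) \<subseteq> J \<Longrightarrow> restr W J = W"
  by (induction W) (auto simp: restr_Cons Int_absorb2)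

lemma restr_cong: "A \<inter> \<Union>(set W) = B \<inter> \<Union>(set W) \<Longrightarrow> restr W A = restr W B"
proof (induction W)
  case Nil thus ?case by simp
next
  case (Cons X W)
  have "X \<inter> A = X \<inter> B" using Cons.prems by auto
  moreover have "A \<inter> \<Union>(set W) = B \<inter> \<Union>(set W)" using Cons.prems by auto
  ultimately show ?case using Cons.IH by (simp add: restr_Cons)
qed

lemma last_restr: "W \<noteq> [] \<Longrightarrow> last W \<inter> J \<noteq> {} \<Longrightarrow> last (restr W J) = last W \<inter> J"
proof -
  assume "W \<noteq> []" "last W \<inter> J \<noteq> {}"
  then have "W = butlast W @ [last W]" by simp
  then have "restr W J = restr (butlast W) J @ [last W \<inter> J]"
    using \<open>last W \<inter> J \<noteq> {}\<close> by (metis restr_append restr_Cons restr_Nil)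
  thus ?thesis by simp
qed

definition shift :: "nat \<Rightarrow> nat set list \<Rightarrow> nat set list" where
  "shift k C = map (\<lambda>X. (\<lambda>t. t - k) ` X) C"

lemma shift_0[simp]: "shift 0 C = C" by (simp add: shift_def)
lemma shift_shift: "shift a (shift b C) = shift (b + a) C"
  by (simp add: shift_def image_image diff_diff_left)
lemma length_shift[simp]: "length (shift k C) = length C" by (simp add: shift_def)
lemma Union_shift: "\<Union>(set (shift k C)) = (\<lambda>t. t - k) ` \<Union>(set C)"
  by (auto simp: shift_def)
lemma last_shift: "C \<noteq> [] \<Longrightarrow> last (shift k C) = (\<lambda>t. t - k) ` last C"
  by (simp add: shift_def last_map)

lemma restr_shift: "restr (shift k C) K = shift k (restr C {t. t - k \<in> K})"
proof (induction C)
  case Nil thus ?case by (simp add: shift_def)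
next
  case (Cons X C)
  have e: "(\<lambda>t. t - k) ` X \<inter> K = (\<lambda>t. t - k) ` (X \<inter> {t. t - k \<in> K})" by auto
  show ?case using Cons by (simp add: shift_def restr_Cons e) 
qed

definition cnt :: "nat set list \<Rightarrow> nat set \<Rightarrow> nat set \<Rightarrow> nat" where
  "cnt W X Y = length (filter (\<lambda>Z. Z \<inter> X \<noteq> {} \<and> Z \<inter> Y \<noteq> {}) W)"

lemma capn_cnt: "capn B W S = cnt W {1..msize B} S"
  by (simp add: capn_def cnt_def length_filter_conv_card)

lemma cnt_restr: "X \<subseteq> J \<Longrightarrow> Y \<subseteq> J \<Longrightarrow> cnt (restr W J) X Y = cnt W X Y"
proof (induction W)
  case Nil thus ?case by (simp add: cnt_def)
next
  case (Cons Z W)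
  have a: "Z \<inter> J \<inter> X = Z \<inter> X" "Z \<inter> J \<inter> Y = Z \<inter> Y" using Cons.prems by auto
  show ?case using Cons by (auto simp: cnt_def restr_Cons a)
qed

lemma cnt_shift: "cnt (shift k C) X Y = cnt C {t. t - k \<in> X} {t. t - k \<in> Y}"
proof (induction C)
  case Nil thus ?case by (simp add: cnt_def shift_def)
next
  case (Cons Z C)
  have e: "((\<lambda>t. t - k) ` Z \<inter> X = {}) = (Z \<inter> {t. t - k \<in> X} = {})" for X by auto
  show ?case using Cons.IH unfolding cnt_def shift_def by (simp add: e)
qed

lemma cnt_cong: "\<Union>(set W) \<subseteq> U \<Longrightarrow> X \<inter> U = X' \<inter> U \<Longrightarrow> Y \<inter> U = Y' \<inter> U \<Longrightarrow> cnt W X Y = cnt W X' Y'"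
proof (induction W)
  case Nil thus ?case by (simp add: cnt_def)
next
  case (Cons Z W)
  have "Z \<inter> X = Z \<inter> X'" "Z \<inter> Y = Z \<inter> Y'" using Cons.prems by auto
  moreover have "cnt W X Y = cnt W X' Y'" using Cons.prems by (intro Cons.IH) auto
  ultimately show ?case by (simp add: cnt_def)
qed

lemma cnt_ident: "cnt W A B + cnt W (A \<union> B) C = cnt W B C + cnt W A (B \<union> C)"
  by (induction W) (auto simp: cnt_def Int_Un_distrib)

lemma cnt_pos: "W \<noteq> [] \<Longrightarrow> last W \<inter> X \<noteq> {} \<Longrightarrow> last W \<inter> Y \<noteq> {} \<Longrightarrow> 1 \<le> cnt W X Y"
proof -
  assume h: "W \<noteq> []" "last W \<inter> X \<noteq> {}" "last W \<inter> Y \<noteq> {}"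
  then have "W = butlast W @ [last W]" by simp
  then have "cnt W X Y = cnt (butlast W) X Y + cnt [last W] X Y" unfolding cnt_def
    by (metis filter_append length_append)
  thus ?thesis using h by (simp add: cnt_def)
qed


lemma Mperm_dlist: "Mperm n W \<Longrightarrow> dlist W"
  by (simp add: Mperm_def dlist_def)
lemma Mperm_Union: "Mperm n W \<Longrightarrow> \<Union>(set W) = {1..n}"
  by (simp add: Mperm_def)
lemma msize_Mperm: "Mperm n W \<Longrightarrow> msize W = n"
  by (simp add: Mperm_def msize_def)
lemma Mperm_nonnil: "Mperm n W \<Longrightarrow> 1 \<le> n \<Longrightarrow> W \<noteq> []"
  by (auto simp: Mperm_def)
lemma Mperm_last: "Mperm n W \<Longrightarrow> 1 \<le> n \<Longrightarrow> last W \<noteq> {} \<and> last W \<subseteq> {1..n}"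
proof -
  assume a: "Mperm n W" "1 \<le> n"
  then have "W \<noteq> []" by (rule Mperm_nonnil)
  then have "last W \<in> set W" by simp
  thus ?thesis using a by (auto simp: Mperm_def)
qed
lemma Mperm_consec: "Mperm n W \<Longrightarrow> X \<in> set W \<Longrightarrow> 1 \<le> i \<Longrightarrow> i < n \<Longrightarrow> i \<in> X \<Longrightarrow> Suc i \<in> X \<Longrightarrow> False"
  by (auto simp: Mperm_def)

lemma dlist_distinct: "dlist W \<Longrightarrow> distinct W"
  unfolding dlist_def distinct_conv_nth by (metis Int_absorb nth_mem)

lemma finite_Mperm: "finite {W. Mperm n W}"
proof -
  have "{W. Mperm n W} \<subseteq> {xs. set xs \<subseteq> Pow {1..n} \<and> length xs \<le> card (Pow {1..n::nat})}"
  proof safe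
    fix W assume m: "Mperm n W"
    show "x \<in> {1..n}" if "X \<in> set W" "x \<in> X" for X x using m that by (auto simp: Mperm_def)
    have "distinct W" using m by (intro dlist_distinct Mperm_dlist)
    then have "length W = card (set W)" by (simp add: distinct_card)
    also have "\<dots> \<le> card (Pow {1..n})"
      using m by (intro card_mono) (auto simp: Mperm_def)
    finally show "length W \<le> card (Pow {1..n})" .
  qed
  moreover have "finite {xs. set xs \<subseteq> Pow {1..n::nat} \<and> length xs \<le> card (Pow {1..n::nat})}"
    by (intro finite_lists_length_le) auto
  ultimately show ?thesis by (rule finite_subset)
qed

lemma destutter_id: "successively (\<noteq>) xs \<Longrightarrow> destutter xs = xs"
  by (induction xs rule: destutter.induct) auto

lemma restr_block_sub: "Y \<in> set (restr W J) \<Longrightarrow> \<exists>X\<in>set W. Y \<subseteq> X"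
  by (auto dest!: set_restr)

lemma blk_idx_eq: "dlist C \<Longrightarrow> c < length C \<Longrightarrow> s \<in> C ! c \<Longrightarrow> blk_idx C s = c"
  unfolding blk_idx_def
  by (rule the_equality) (auto simp: dlist_def)

lemma stdM_interval:
  assumes W: "Mperm N W" and lo: "1 \<le> lo" "lo \<le> hi" "hi \<le> N"
  shows "stdM (restr W {lo..hi}) = shift (lo - 1) (restr W {lo..hi})"
proof -
  define C where "C = restr W {lo..hi}"
  have dC: "dlist C" unfolding C_def by (intro dlist_restr Mperm_dlist[OF W])
  have UC: "\<Union>(set C) = {lo..hi}" unfolding C_def Union_restr Mperm_Union[OF W] using lo by auto
  have ex: "\<exists>c<length C. s \<in> C ! c" if "s \<in> {lo..hi}" for s
  proof -
    from that UC obtain X where "X \<in> set C" "s \<in> X" by blast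
    thus ?thesis by (auto simp: in_set_conv_nth)
  qed
  have sl: "sorted_list_of_set {lo..hi} = [lo..<Suc hi]"
    by (metis atLeastLessThanSuc_atLeastAtMost sorted_list_of_set_range)
  define w where "w = map (blk_idx C) [lo..<Suc hi]"
  have lw: "length w = hi + 1 - lo" unfolding w_def using lo by simp
  have wi: "w ! i = blk_idx C (lo + i)" if "i < length w" for i
    using that lw unfolding w_def by (simp del: upt_Suc)
  have ns: "w ! i \<noteq> w ! Suc i" if "Suc i < length w" for i
  proof
    assume eq: "w ! i = w ! Suc i"
    have s: "lo + i \<in> {lo..hi}" "Suc (lo + i) \<in> {lo..hi}" using that lw by auto
    obtain c where c: "c < length C" "lo + i \<in> C ! c" using ex[OF s(1)] by blast
    obtain c' where c': "c' < length C" "Suc (lo + i) \<in> C ! c'" using ex[OF s(2)] by blast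
    have "w ! i = c" "w ! Suc i = c'" using that wi blk_idx_eq[OF dC c] blk_idx_eq[OF dC c']
      by auto
    then have "c = c'" using eq by simp
    then obtain X where "X \<in> set W" "C ! c \<subseteq> X"
      using restr_block_sub c(1) unfolding C_def by (metis nth_mem)
    thus False using Mperm_consec[OF W, of X "lo + i"] c c' \<open>c = c'\<close> s lo by auto
  qed
  have dw: "destutter w = w"
    by (rule destutter_id) (use ns in \<open>auto simp: successively_conv_nth\<close>)
  have std: "stdM C = map (\<lambda>c. {t. 1 \<le> t \<and> t \<le> length w \<and> w ! (t - 1) = c}) [0..<length C]"
    unfolding stdM_def Let_def UC sl w_def[symmetric] dw by simp
  show ?thesis unfolding C_def[symmetric] std
  proof (rule nth_equalityI)
    fix c assume "c < length (map (\<lambda>c. {t. 1 \<le> t \<and> t \<le> length w \<and> w ! (t - 1) = c}) [0..<length C])"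
    then have c: "c < length C" by simp
    have sub: "C ! c \<subseteq> {lo..hi}" using c UC by (metis Union_upper nth_mem)
    have "{t. 1 \<le> t \<and> t \<le> length w \<and> w ! (t - 1) = c} = (\<lambda>t. t - (lo - 1)) ` (C ! c)"
    proof (intro equalityI subsetI)
      fix t assume "t \<in> {t. 1 \<le> t \<and> t \<le> length w \<and> w ! (t - 1) = c}"
      then have t: "1 \<le> t" "t \<le> length w" "w ! (t - 1) = c" by auto
      have s: "lo + (t - 1) \<in> {lo..hi}" using t lw by auto
      obtain c' where c': "c' < length C" "lo + (t - 1) \<in> C ! c'" using ex[OF s] by blast
      have "w ! (t - 1) = c'" using blk_idx_eq[OF dC c'] t wi[of "t - 1"] by auto
      then have "c' = c" using t by simp
      moreover have "t = (lo + (t - 1)) - (lo - 1)" using t lo by auto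
      ultimately show "t \<in> (\<lambda>t. t - (lo - 1)) ` (C ! c)" using c' by blast
    next
      fix x assume "x \<in> (\<lambda>t. t - (lo - 1)) ` (C ! c)"
      then obtain s where s: "s \<in> C ! c" and xs: "x = s - (lo - 1)" by blast
      then have sr: "lo \<le> s" "s \<le> hi" using sub by auto
      have r1: "1 \<le> s - (lo - 1)" "s - (lo - 1) \<le> length w" using sr lo lw by auto
      have "w ! (s - (lo - 1) - 1) = blk_idx C s" using sr lo wi[of "s - (lo - 1) - 1"] lw by auto
      thus "x \<in> {t. 1 \<le> t \<and> t \<le> length w \<and> w ! (t - 1) = c}" using blk_idx_eq[OF dC c s] r1 xs by simp
    qed
    thus "map (\<lambda>c. {t. 1 \<le> t \<and> t \<le> length w \<and> w ! (t - 1) = c}) [0..<length C] ! c = shift (lo - 1) C ! c"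
      using c by (simp add: shift_def)
  qed simp
qed

lemma Mperm_shift_interval:
  assumes W: "Mperm N W" and lo: "1 \<le> lo" "lo \<le> hi" "hi \<le> N"
  shows "Mperm (hi + 1 - lo) (shift (lo - 1) (restr W {lo..hi}))"
proof -
  define C where "C = restr W {lo..hi}"
  define k where "k = lo - 1"
  define f where "f = (\<lambda>t::nat. t - k)"
  have dC: "dlist C" unfolding C_def by (intro dlist_restr Mperm_dlist[OF W])
  have UC: "\<Union>(set C) = {lo..hi}" unfolding C_def Union_restr Mperm_Union[OF W] using lo by auto
  have inj: "inj_on f {lo..hi}" unfolding f_def k_def by (rule inj_on_diff_nat) auto
  have sh: "shift (lo - 1) C = map ((`) f) C" unfolding shift_def f_def k_def by simp
  show ?thesis unfolding C_def[symmetric] sh Mperm_def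
  proof (intro conjI allI impI)
    show "\<forall>X\<in>set (map ((`) f) C). X \<noteq> {}" using dC by (auto simp: dlist_def)
  next
    fix i j assume ij: "i < length (map ((`) f) C)" "j < length (map ((`) f) C)" "i \<noteq> j"
    have "C ! i \<subseteq> {lo..hi}" "C ! j \<subseteq> {lo..hi}" using ij UC by (auto intro: Union_upper nth_mem)
    then have "f ` (C ! i) \<inter> f ` (C ! j) = f ` (C ! i \<inter> C ! j)"
      using inj by (simp add: inj_on_image_Int)
    also have "\<dots> = {}" using dC ij by (simp add: dlist_def)
    finally show "map ((`) f) C ! i \<inter> map ((`) f) C ! j = {}" using ij by simp
  next
    have "\<Union>(set (map ((`) f) C)) = f ` {lo..hi}" using UC by auto
    also have "\<dots> = {1..hi + 1 - lo}"
    proof safe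
      fix x assume "x \<in> {1..hi + 1 - lo}"
      then have "x = f (x + k)" "x + k \<in> {lo..hi}" using lo unfolding f_def k_def by auto
      thus "x \<in> f ` {lo..hi}" by blast
    qed (use lo in \<open>auto simp: f_def k_def\<close>)
    finally show "\<Union>(set (map ((`) f) C)) = {1..hi + 1 - lo}" .
  next
    fix i assume i: "1 \<le> i \<and> i < hi + 1 - lo"
    show "\<not> (\<exists>X\<in>set (map ((`) f) C). i \<in> X \<and> Suc i \<in> X)"
    proof
      assume "\<exists>X\<in>set (map ((`) f) C). i \<in> X \<and> Suc i \<in> X"
      then obtain Y where Y: "Y \<in> set C" "i \<in> f ` Y" "Suc i \<in> f ` Y" by auto
      have Ysub: "Y \<subseteq> {lo..hi}" using Y UC by auto
      obtain y1 y2 where y: "y1 \<in> Y" "y2 \<in> Y" "i = f y1" "Suc i = f y2" using Y by blast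
      have "y1 = i + k" "y2 = Suc (i + k)" using y Ysub lo unfolding f_def k_def by auto
      moreover obtain X where "X \<in> set W" "Y \<subseteq> X" using Y restr_block_sub unfolding C_def by blast
      ultimately show False using Mperm_consec[OF W, of X "i + k"] y i lo Ysub unfolding k_def by force
    qed
  qed
qed


definition Sg :: "nat \<Rightarrow> nat \<Rightarrow> nat \<Rightarrow> nat set" where
  "Sg e n m = {n + 1 - e .. n + m - e}"

locale trip =
  fixes a b c :: "nat set list" and n1 n2 n3 e1 e2 :: nat
  assumes ma: "Mperm n1 a" and mb: "Mperm n2 b" and mc: "Mperm n3 c"
    and p1: "1 \<le> n1" and p2: "1 \<le> n2" and p3: "1 \<le> n3"
    and e1: "e1 \<le> 1" and e2: "e2 \<le> 1"
begin

definition "n12 = n1 + n2 - e1"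
definition "n23 = n2 + n3 - e2"
definition "N = n12 + n3 - e2"
definition "k = n1 - e1"
definition "I1 = {1..n1}"
definition "I2 = Sg e1 n1 n2"
definition "I3 = Sg e2 n12 n3"
definition "J = Sg e1 n1 n23"
definition "V0 W = restr W {1..n12}"
definition "V1 W = stdM (restr W J)"
definition "tri W \<longleftrightarrow> Mperm N W \<and> restr W I1 = a \<and> stdM (restr W I2) = b \<and> stdM (restr W I3) = c"

lemma msa: "msize a = n1" using ma by (rule msize_Mperm)
lemma msb: "msize b = n2" using mb by (rule msize_Mperm)
lemma msc: "msize c = n3" using mc by (rule msize_Mperm)

lemma N_alt: "n1 + n23 - e1 = N" using p1 p2 p3 e1 e2 unfolding N_def n12_def n23_def by auto
lemma I2_def': "I2 = {n1 + 1 - e1 .. n12}" unfolding I2_def Sg_def n12_def by simp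
lemma I3_def': "I3 = {n12 + 1 - e2 .. N}" unfolding I3_def Sg_def N_def by simp
lemma J_def': "J = {n1 + 1 - e1 .. N}" unfolding J_def Sg_def N_alt by simp
lemma J_un: "J = I2 \<union> I3" unfolding J_def' I2_def' I3_def' n12_def N_def using p1 p2 p3 e1 e2 by auto
lemma pre_un: "{1..n12} = I1 \<union> I2" unfolding I1_def I2_def' n12_def using p1 p2 p3 e1 e2 by auto
lemma all_un: "{1..N} = I1 \<union> I2 \<union> I3" unfolding I1_def I2_def' I3_def' n12_def N_def using p1 p2 p3 e1 e2 by auto
lemma k_lo: "n1 + 1 - e1 - 1 = k" unfolding k_def using p1 by simp
lemma pre_un': "{Suc 0..n12} = I1 \<union> I2" using pre_un by simp
lemma J_b: "J \<inter> {t. t - k \<in> {1..n2}} = I2" unfolding J_def' I2_def' k_def n12_def N_def using p1 p2 p3 e1 e2 by auto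
lemma J_c: "J \<inter> {t. t - k \<in> Sg e2 n2 n3} = I3" unfolding J_def' I3_def' k_def n12_def N_def Sg_def using p1 p2 p3 e1 e2 by auto
lemma J_b': "J \<inter> {t. Suc 0 \<le> t - k \<and> t - k \<le> n2} = I2" using J_b by simp
lemma n12_le: "1 \<le> n12" "n12 \<le> N" unfolding n12_def N_def using p1 p2 p3 e1 e2 by auto

lemma V0_Mperm: "Mperm N W \<Longrightarrow> Mperm n12 (V0 W)"
  using Mperm_shift_interval[of N W 1 n12] n12_le unfolding V0_def by simp

lemma V1_eq: "Mperm N W \<Longrightarrow> V1 W = shift k (restr W J)"
  using stdM_interval[of N W "n1 + 1 - e1" N] p1 p2 p3 e1 e2 unfolding V1_def J_def' k_lo
  by (simp add: N_def n12_def)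

lemma V1_Mperm: "Mperm N W \<Longrightarrow> Mperm n23 (V1 W)"
  using Mperm_shift_interval[of N W "n1 + 1 - e1" N] p1 p2 p3 e1 e2 V1_eq unfolding J_def' k_lo
  by (simp add: N_def n12_def n23_def)

lemma std_I2: "Mperm N W \<Longrightarrow> stdM (restr W I2) = shift k (restr W I2)"
  using stdM_interval[of N W "n1 + 1 - e1" n12] p1 p2 p3 e1 e2 n12_le unfolding I2_def' k_lo
  by (simp add: n12_def)

lemma std_I3: "Mperm N W \<Longrightarrow> stdM (restr W I3) = shift (n12 - e2) (restr W I3)"
  using stdM_interval[of N W "n12 + 1 - e2" N] p1 p2 p3 e1 e2 n12_le unfolding I3_def'
  by (simp add: n12_def N_def)

lemma V1_b: "Mperm N W \<Longrightarrow> restr (V1 W) {1..n2} = shift k (restr W I2)"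
  by (simp only: V1_eq restr_shift restr_restr J_b)

lemma V1_c: "Mperm N W \<Longrightarrow> stdM (restr (V1 W) (Sg e2 n2 n3)) = shift (n12 - e2) (restr W I3)"
proof -
  assume W: "Mperm N W"
  have "stdM (restr (V1 W) (Sg e2 n2 n3)) = shift (n2 - e2) (restr (V1 W) (Sg e2 n2 n3))"
    using stdM_interval[OF V1_Mperm[OF W], of "n2 + 1 - e2" n23] p1 p2 p3 e1 e2
    unfolding Sg_def n23_def by simp
  also have "\<dots> = shift (n2 - e2) (shift k (restr W I3))"
    using W by (simp only: V1_eq restr_shift restr_restr J_c)
  also have "\<dots> = shift (n12 - e2) (restr W I3)"
    unfolding shift_shift k_def n12_def using p1 p2 e1 e2 by (simp add: algebra_simps)
  finally show ?thesis .
qed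

lemma left_adm:
  "admissible a b V n12 I2 \<and> admissible V c W (msize V + n3 - e2) (Sg e2 (msize V) n3) \<longleftrightarrow>
   tri W \<and> V = V0 W"
proof
  assume h: "admissible a b V n12 I2 \<and> admissible V c W (msize V + n3 - e2) (Sg e2 (msize V) n3)"
  have mv: "msize V = n12" using h by (auto simp: admissible_def intro: msize_Mperm)
  have W: "Mperm N W" using h mv by (simp add: admissible_def N_def)
  have V: "V = V0 W" using h mv by (simp add: admissible_def V0_def)
  have r1: "restr V I1 = restr W I1" "restr V I2 = restr W I2"
    unfolding V V0_def restr_restr pre_un by (simp_all add: Int_absorb1)
  have "restr W I1 = a" using h r1 by (simp add: admissible_def msa I1_def)
  moreover have "stdM (restr W I2) = b" using h r1 by (simp add: admissible_def)
  moreover have "stdM (restr W I3) = c" using h mv by (simp add: admissible_def I3_def)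
  ultimately show "tri W \<and> V = V0 W" using W V by (simp add: tri_def)
next
  assume h: "tri W \<and> V = V0 W"
  then have W: "Mperm N W" and V: "V = V0 W" by (auto simp: tri_def)
  have mv: "msize V = n12" using V0_Mperm[OF W] V by (simp add: msize_Mperm)
  have r1: "restr V I1 = restr W I1" "restr V I2 = restr W I2"
    unfolding V V0_def restr_restr pre_un by (simp_all add: Int_absorb1)
  have "Mperm n12 V" using V0_Mperm[OF W] V by simp
  moreover have "restr V {1..msize a} = a" using r1 h by (simp add: tri_def msa I1_def)
  moreover have "stdM (restr V I2) = b" using r1 h by (simp add: tri_def)
  moreover have "Mperm (msize V + n3 - e2) W" using W mv by (simp add: N_def)
  moreover have "restr W {1..msize V} = V" using V mv by (simp add: V0_def)
  moreover have "stdM (restr W (Sg e2 (msize V) n3)) = c" using h mv by (simp add: tri_def I3_def)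
  ultimately show "admissible a b V n12 I2 \<and> admissible V c W (msize V + n3 - e2) (Sg e2 (msize V) n3)"
    unfolding admissible_def msa by simp
qed

lemma right_adm:
  "admissible b c V n23 (Sg e2 n2 n3) \<and> admissible a V W (n1 + msize V - e1) (Sg e1 n1 (msize V)) \<longleftrightarrow>
   tri W \<and> V = V1 W"
proof
  assume h: "admissible b c V n23 (Sg e2 n2 n3) \<and> admissible a V W (n1 + msize V - e1) (Sg e1 n1 (msize V))"
  have mv: "msize V = n23" using h by (auto simp: admissible_def intro: msize_Mperm)
  have W: "Mperm N W" using h mv by (simp add: admissible_def N_alt)
  have V: "V = V1 W" using h mv by (simp add: admissible_def V1_def J_def)
  have "restr W I1 = a" using h by (simp add: admissible_def msa I1_def)
  moreover have "stdM (restr W I2) = b" using h V V1_b[OF W] std_I2[OF W] by (simp add: admissible_def msb)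
  moreover have "stdM (restr W I3) = c" using h V V1_c[OF W] std_I3[OF W] by (simp add: admissible_def msb)
  ultimately show "tri W \<and> V = V1 W" using W V by (simp add: tri_def)
next
  assume h: "tri W \<and> V = V1 W"
  then have W: "Mperm N W" and V: "V = V1 W" by (auto simp: tri_def)
  have mv: "msize V = n23" using V1_Mperm[OF W] V by (simp add: msize_Mperm)
  show "admissible b c V n23 (Sg e2 n2 n3) \<and> admissible a V W (n1 + msize V - e1) (Sg e1 n1 (msize V))"
    unfolding admissible_def mv msa msb N_alt J_def[symmetric]
  proof (intro conjI)
    show "Mperm n23 V" using V1_Mperm[OF W] V by simp
    show "restr V {1..n2} = b" using V V1_b[OF W] std_I2[OF W] h by (simp add: tri_def)
    show "stdM (restr V (Sg e2 n2 n3)) = c" using V V1_c[OF W] std_I3[OF W] h by (simp add: tri_def)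
    show "Mperm N W" by (rule W)
    show "restr W {1..n1} = a" using h by (simp add: tri_def I1_def)
    show "stdM (restr W J) = V" using V by (simp add: V1_def)
  qed
qed

lemma tri_W: "tri W \<Longrightarrow> Mperm N W" by (simp add: tri_def)
lemma tri_nonnil: "tri W \<Longrightarrow> W \<noteq> []"
  using Mperm_nonnil[of N W] n12_le by (auto simp: tri_def)
lemma tri_last: "tri W \<Longrightarrow> last W \<noteq> {} \<and> last W \<subseteq> I1 \<union> I2 \<union> I3"
  using Mperm_last[of N W] n12_le all_un by (auto simp: tri_def)
lemma V0_alt: "V0 W = restr W (I1 \<union> I2)" unfolding V0_def pre_un ..
lemma msV0: "tri W \<Longrightarrow> msize (V0 W) = n12" by (intro msize_Mperm V0_Mperm tri_W)

lemma restr_nonnil: "W \<noteq> [] \<Longrightarrow> last W \<inter> J' \<noteq> {} \<Longrightarrow> restr W J' \<noteq> []"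
proof
  assume h: "W \<noteq> []" "last W \<inter> J' \<noteq> {}" "restr W J' = []"
  have "last W \<inter> J' \<subseteq> \<Union>(set W) \<inter> J'" using h(1) last_in_set by auto
  also have "\<dots> = {}" using Union_restr[of W J'] h(3) by simp
  finally show False using h(2) by simp
qed

lemma last_V0: "tri W \<Longrightarrow> last W \<inter> (I1 \<union> I2) \<noteq> {} \<Longrightarrow> last (V0 W) = last W \<inter> (I1 \<union> I2)"
  unfolding V0_alt by (intro last_restr tri_nonnil)

lemma last_V1: "tri W \<Longrightarrow> last W \<inter> (I2 \<union> I3) \<noteq> {} \<Longrightarrow> last (V1 W) = (\<lambda>t. t - k) ` (last W \<inter> J)"
  using V1_eq[OF tri_W] last_shift restr_nonnil last_restr tri_nonnil J_un by metis

lemma img_disj: "((\<lambda>t::nat. t - k) ` X \<inter> K = {}) \<longleftrightarrow> (X \<inter> {t. t - k \<in> K} = {})" by auto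

lemma condL_succ: "tri W \<Longrightarrow> cond_succ (V0 W) W I3 \<longleftrightarrow> last W \<inter> I1 = {} \<and> last W \<inter> I2 = {}"
  by (auto simp: cond_succ_def msV0 pre_un')
lemma condL_prec: "cond_prec (V0 W) W I3 \<longleftrightarrow> last W \<inter> I3 = {}"
  by (simp add: cond_prec_def)
lemma condL_dot: "tri W \<Longrightarrow> cond_dot (V0 W) W I3 \<longleftrightarrow> (last W \<inter> I1 \<noteq> {} \<or> last W \<inter> I2 \<noteq> {}) \<and> last W \<inter> I3 \<noteq> {}"
  by (auto simp: cond_dot_def msV0 pre_un')
lemma condLi_succ: "tri W \<Longrightarrow> last W \<inter> (I1 \<union> I2) \<noteq> {} \<Longrightarrow> cond_succ a (V0 W) I2 \<longleftrightarrow> last W \<inter> I1 = {}"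
  by (auto simp: cond_succ_def last_V0 msa I1_def)
lemma condLi_prec: "tri W \<Longrightarrow> last W \<inter> (I1 \<union> I2) \<noteq> {} \<Longrightarrow> cond_prec a (V0 W) I2 \<longleftrightarrow> last W \<inter> I2 = {}"
  by (auto simp: cond_prec_def last_V0)
lemma condLi_dot: "tri W \<Longrightarrow> last W \<inter> (I1 \<union> I2) \<noteq> {} \<Longrightarrow> cond_dot a (V0 W) I2 \<longleftrightarrow> last W \<inter> I1 \<noteq> {} \<and> last W \<inter> I2 \<noteq> {}"
  by (auto simp: cond_dot_def last_V0 msa I1_def)
lemma condR_succ: "cond_succ a W J \<longleftrightarrow> last W \<inter> I1 = {}"
  by (simp add: cond_succ_def msa I1_def)
lemma condR_prec: "cond_prec a W J \<longleftrightarrow> last W \<inter> I2 = {} \<and> last W \<inter> I3 = {}"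
  by (auto simp: cond_prec_def J_un)
lemma condR_dot: "cond_dot a W J \<longleftrightarrow> last W \<inter> I1 \<noteq> {} \<and> (last W \<inter> I2 \<noteq> {} \<or> last W \<inter> I3 \<noteq> {})"
  by (auto simp: cond_dot_def msa I1_def J_un)

lemma lastV1_b: "tri W \<Longrightarrow> last W \<inter> (I2 \<union> I3) \<noteq> {} \<Longrightarrow> (last (V1 W) \<inter> {1..n2} = {}) \<longleftrightarrow> last W \<inter> I2 = {}"
proof -
  assume h: "tri W" "last W \<inter> (I2 \<union> I3) \<noteq> {}"
  have "(last (V1 W) \<inter> {1..n2} = {}) \<longleftrightarrow> last W \<inter> (J \<inter> {t. t - k \<in> {1..n2}}) = {}"
    unfolding last_V1[OF h] img_disj by (simp add: Int_assoc)
  thus ?thesis by (simp add: J_b')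
qed
lemma lastV1_c: "tri W \<Longrightarrow> last W \<inter> (I2 \<union> I3) \<noteq> {} \<Longrightarrow> (last (V1 W) \<inter> Sg e2 n2 n3 = {}) \<longleftrightarrow> last W \<inter> I3 = {}"
proof -
  assume h: "tri W" "last W \<inter> (I2 \<union> I3) \<noteq> {}"
  have "(last (V1 W) \<inter> Sg e2 n2 n3 = {}) \<longleftrightarrow> last W \<inter> (J \<inter> {t. t - k \<in> Sg e2 n2 n3}) = {}"
    unfolding last_V1[OF h] img_disj by (simp add: Int_assoc)
  thus ?thesis by (simp add: J_c)
qed

lemma condRi_succ: "tri W \<Longrightarrow> last W \<inter> (I2 \<union> I3) \<noteq> {} \<Longrightarrow> cond_succ b (V1 W) (Sg e2 n2 n3) \<longleftrightarrow> last W \<inter> I2 = {}"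
  using lastV1_b by (simp add: cond_succ_def msb)
lemma condRi_prec: "tri W \<Longrightarrow> last W \<inter> (I2 \<union> I3) \<noteq> {} \<Longrightarrow> cond_prec b (V1 W) (Sg e2 n2 n3) \<longleftrightarrow> last W \<inter> I3 = {}"
  using lastV1_c by (simp add: cond_prec_def)
lemma condRi_dot: "tri W \<Longrightarrow> last W \<inter> (I2 \<union> I3) \<noteq> {} \<Longrightarrow> cond_dot b (V1 W) (Sg e2 n2 n3) \<longleftrightarrow> last W \<inter> I2 \<noteq> {} \<and> last W \<inter> I3 \<noteq> {}"
  using lastV1_b lastV1_c by (simp add: cond_dot_def msb)

lemma I_sub: "I1 \<subseteq> I1 \<union> I2" "I2 \<subseteq> I1 \<union> I2" "I2 \<subseteq> J" "I3 \<subseteq> J" by (auto simp: J_un)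

lemma capL1: "capn a (V0 W) I2 = cnt W I1 I2"
  unfolding capn_cnt msa V0_alt I1_def[symmetric] by (intro cnt_restr I_sub)
lemma capL2: "tri W \<Longrightarrow> capn (V0 W) W I3 = cnt W (I1 \<union> I2) I3"
  by (simp add: capn_cnt msV0 pre_un')
lemma capR2: "capn a W J = cnt W I1 (I2 \<union> I3)"
  by (simp add: capn_cnt msa I1_def J_un)
lemma capR1: "tri W \<Longrightarrow> capn b (V1 W) (Sg e2 n2 n3) = cnt W I2 I3"
proof -
  assume h: "tri W"
  have "capn b (V1 W) (Sg e2 n2 n3) = cnt (restr W J) {t. t - k \<in> {1..n2}} {t. t - k \<in> Sg e2 n2 n3}"
    by (simp add: capn_cnt msb V1_eq[OF tri_W[OF h]] cnt_shift)
  also have "\<dots> = cnt (restr W J) I2 I3"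
    by (rule cnt_cong[where U = J]) (use J_b J_c I_sub in \<open>auto simp: Union_restr\<close>)
  also have "\<dots> = cnt W I2 I3" by (intro cnt_restr I_sub)
  finally show ?thesis .
qed

lemma tri_cnt_pos: "tri W \<Longrightarrow> last W \<inter> X \<noteq> {} \<Longrightarrow> last W \<inter> Y \<noteq> {} \<Longrightarrow> 1 \<le> cnt W X Y"
  by (intro cnt_pos tri_nonnil)

end


definition MM :: "nat set list set" where "MM = {B. \<exists>n\<ge>1. Mperm n B}"
definition UU :: "nat set list \<Rightarrow> nat set list \<Rightarrow> nat set list set" where
  "UU B D = {V. Mperm (msize B + msize D) V} \<union> {V. Mperm (msize B + msize D - 1) V}"
definition good :: "(nat set list \<Rightarrow> nat set list \<Rightarrow> nat set list \<Rightarrow> 'k::field) \<Rightarrow> bool" where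
  "good g \<longleftrightarrow> (\<forall>B D V. g B D V \<noteq> 0 \<longrightarrow> V \<in> UU B D)"

lemma in_MMR_alt: "in_MMR x \<longleftrightarrow> finite (supp x) \<and> supp x \<subseteq> MM"
  by (auto simp: in_MMR_def MM_def)

lemma UU_fin: "finite (UU B D)" by (simp add: UU_def finite_Mperm)
lemma MM_size: "B \<in> MM \<Longrightarrow> 1 \<le> msize B" by (auto simp: MM_def msize_Mperm)
lemma UU_MM: "B \<in> MM \<Longrightarrow> D \<in> MM \<Longrightarrow> UU B D \<subseteq> MM"
proof
  fix V assume "B \<in> MM" "D \<in> MM" "V \<in> UU B D"
  moreover have "1 \<le> msize B + msize D" "1 \<le> msize B + msize D - 1"
    using MM_size[OF \<open>B \<in> MM\<close>] MM_size[OF \<open>D \<in> MM\<close>] by auto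
  ultimately show "V \<in> MM" unfolding UU_def MM_def by blast
qed

lemma bilin_superset:
  assumes "finite A" "supp x \<subseteq> A" "finite C" "supp y \<subseteq> C"
  shows "bilin f x y W = (\<Sum>B\<in>A. \<Sum>D\<in>C. x B * y D * f B D W)"
proof -
  have fx: "finite (supp x)" "finite (supp y)" using assms finite_subset by auto
  have "bilin f x y W = (\<Sum>B\<in>supp x. \<Sum>D\<in>C. x B * y D * f B D W)"
    unfolding bilin_def
    by (intro sum.cong refl sum.mono_neutral_left) (use assms in \<open>auto simp: supp_def\<close>)
  also have "\<dots> = (\<Sum>B\<in>A. \<Sum>D\<in>C. x B * y D * f B D W)"
    by (intro sum.mono_neutral_left) (use assms in \<open>auto simp: supp_def\<close>)
  finally show ?thesis .
qed

lemma supp_bilin: "good g \<Longrightarrow> supp (bilin g x y) \<subseteq> (\<Union>B\<in>supp x. \<Union>D\<in>supp y. UU B D)"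
proof
  fix V assume g: "good g" and "V \<in> supp (bilin g x y)"
  then have "(\<Sum>B\<in>supp x. \<Sum>D\<in>supp y. x B * y D * g B D V) \<noteq> 0" by (simp add: supp_def bilin_def)
  then obtain B D where "B \<in> supp x" "D \<in> supp y" "g B D V \<noteq> 0"
    by (metis (no_types, lifting) mult_zero_right sum.neutral)
  thus "V \<in> (\<Union>B\<in>supp x. \<Union>D\<in>supp y. UU B D)" using g unfolding good_def by blast
qed

lemma in_MMR_bilin:
  assumes g: "good g" and x: "in_MMR x" and y: "in_MMR y" shows "in_MMR (bilin g x y)"
proof -
  have h: "finite (supp x)" "supp x \<subseteq> MM" "finite (supp y)" "supp y \<subseteq> MM"
    using x y by (auto simp: in_MMR_alt)
  have f: "finite (\<Union>B\<in>supp x. \<Union>D\<in>supp y. UU B D)" using h by (simp add: UU_fin)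
  have s: "(\<Union>B\<in>supp x. \<Union>D\<in>supp y. UU B D) \<subseteq> MM"
  proof (intro UN_least)
    fix B D assume "B \<in> supp x" "D \<in> supp y"
    thus "UU B D \<subseteq> MM" using h by (intro UU_MM) auto
  qed
  have sb: "supp (bilin g x y) \<subseteq> (\<Union>B\<in>supp x. \<Union>D\<in>supp y. UU B D)" by (rule supp_bilin[OF g])
  show ?thesis unfolding in_MMR_alt
  proof
    show "finite (supp (bilin g x y))" using f sb by (rule finite_subset[rotated])
    show "supp (bilin g x y) \<subseteq> MM" using sb s by (rule subset_trans)
  qed
qed

lemma swap4: "(\<Sum>V\<in>A. \<Sum>E\<in>Z. \<Sum>B\<in>X. \<Sum>D\<in>Y. (F V E B D::'a::comm_monoid_add)) = (\<Sum>B\<in>X. \<Sum>D\<in>Y. \<Sum>E\<in>Z. \<Sum>V\<in>A. F V E B D)"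
proof -
  have "(\<Sum>V\<in>A. \<Sum>E\<in>Z. \<Sum>B\<in>X. \<Sum>D\<in>Y. F V E B D) = (\<Sum>V\<in>A. \<Sum>B\<in>X. \<Sum>D\<in>Y. \<Sum>E\<in>Z. F V E B D)"
    by (intro sum.cong refl) (subst sum.swap, intro sum.cong refl, rule sum.swap)
  also have "\<dots> = (\<Sum>B\<in>X. \<Sum>D\<in>Y. \<Sum>V\<in>A. \<Sum>E\<in>Z. F V E B D)"
    by (subst sum.swap) (intro sum.cong refl, rule sum.swap)
  also have "\<dots> = (\<Sum>B\<in>X. \<Sum>D\<in>Y. \<Sum>E\<in>Z. \<Sum>V\<in>A. F V E B D)"
    by (intro sum.cong refl) (rule sum.swap)
  finally show ?thesis .
qed

lemma swap3: "(\<Sum>V\<in>A. \<Sum>D\<in>Y. \<Sum>E\<in>Z. (F V D E::'a::comm_monoid_add)) = (\<Sum>D\<in>Y. \<Sum>E\<in>Z. \<Sum>V\<in>A. F V D E)"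
  by (subst sum.swap) (intro sum.cong refl, rule sum.swap)

lemma bilin_left_expand:
  assumes g: "good g" and x: "in_MMR x" and y: "in_MMR y" and z: "in_MMR z"
  shows "bilin f (bilin g x y) z W =
    (\<Sum>B\<in>supp x. \<Sum>D\<in>supp y. \<Sum>E\<in>supp z. x B * y D * z E * (\<Sum>V\<in>UU B D. g B D V * f V E W))"
proof -
  let ?A = "\<Union>B\<in>supp x. \<Union>D\<in>supp y. UU B D"
  have fin: "finite (supp x)" "finite (supp y)" "finite (supp z)" using x y z by (auto simp: in_MMR_def)
  have fA: "finite ?A" using fin by (simp add: UU_fin)
  have "bilin f (bilin g x y) z W = (\<Sum>V\<in>?A. \<Sum>E\<in>supp z. bilin g x y V * z E * f V E W)"
    by (rule bilin_superset) (use fA supp_bilin[OF g] fin in auto)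
  also have "\<dots> = (\<Sum>V\<in>?A. \<Sum>E\<in>supp z. \<Sum>B\<in>supp x. \<Sum>D\<in>supp y. x B * y D * z E * (g B D V * f V E W))"
    unfolding bilin_def by (intro sum.cong refl) (simp add: sum_distrib_right sum_distrib_left mult_ac)
  also have "\<dots> = (\<Sum>B\<in>supp x. \<Sum>D\<in>supp y. \<Sum>E\<in>supp z. \<Sum>V\<in>?A. x B * y D * z E * (g B D V * f V E W))"
    by (rule swap4[where F = "\<lambda>V E B D. x B * y D * z E * (g B D V * f V E W)"])
  also have "\<dots> = (\<Sum>B\<in>supp x. \<Sum>D\<in>supp y. \<Sum>E\<in>supp z. x B * y D * z E * (\<Sum>V\<in>UU B D. g B D V * f V E W))"
  proof (intro sum.cong refl)
    fix B D E assume BD: "B \<in> supp x" "D \<in> supp y"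
    have hA: "(\<Sum>V\<in>?A. g B D V * f V E W) = (\<Sum>V\<in>UU B D. g B D V * f V E W)"
    proof (rule sum.mono_neutral_right)
      show "UU B D \<subseteq> ?A" using BD by blast
      have gz: "g B D V = 0" if "V \<notin> UU B D" for V using g that unfolding good_def by blast
      show "\<forall>V\<in>?A - UU B D. g B D V * f V E W = 0" using gz by simp
    qed (rule fA)
    thus "(\<Sum>V\<in>?A. x B * y D * z E * (g B D V * f V E W)) = x B * y D * z E * (\<Sum>V\<in>UU B D. g B D V * f V E W)"
      by (simp only: hA[symmetric] sum_distrib_left)
  qed
  finally show ?thesis .
qed

lemma bilin_right_expand:
  assumes g: "good g" and x: "in_MMR x" and y: "in_MMR y" and z: "in_MMR z"
  shows "bilin f x (bilin g y z) W =
    (\<Sum>B\<in>supp x. \<Sum>D\<in>supp y. \<Sum>E\<in>supp z. x B * y D * z E * (\<Sum>V\<in>UU D E. g D E V * f B V W))"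
proof -
  let ?A = "\<Union>D\<in>supp y. \<Union>E\<in>supp z. UU D E"
  have fin: "finite (supp x)" "finite (supp y)" "finite (supp z)" using x y z by (auto simp: in_MMR_def)
  have fA: "finite ?A" using fin by (simp add: UU_fin)
  have "bilin f x (bilin g y z) W = (\<Sum>B\<in>supp x. \<Sum>V\<in>?A. x B * bilin g y z V * f B V W)"
    by (rule bilin_superset) (use fA supp_bilin[OF g] fin in auto)
  also have "\<dots> = (\<Sum>B\<in>supp x. \<Sum>V\<in>?A. \<Sum>D\<in>supp y. \<Sum>E\<in>supp z. x B * y D * z E * (g D E V * f B V W))"
    unfolding bilin_def by (intro sum.cong refl) (simp add: sum_distrib_right sum_distrib_left mult_ac)
  also have "\<dots> = (\<Sum>B\<in>supp x. \<Sum>D\<in>supp y. \<Sum>E\<in>supp z. \<Sum>V\<in>?A. x B * y D * z E * (g D E V * f B V W))"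
    by (rule sum.cong[OF refl], rule swap3)
  also have "\<dots> = (\<Sum>B\<in>supp x. \<Sum>D\<in>supp y. \<Sum>E\<in>supp z. x B * y D * z E * (\<Sum>V\<in>UU D E. g D E V * f B V W))"
  proof (intro sum.cong refl)
    fix B D E assume DE: "D \<in> supp y" "E \<in> supp z"
    have hA: "(\<Sum>V\<in>?A. g D E V * f B V W) = (\<Sum>V\<in>UU D E. g D E V * f B V W)"
    proof (rule sum.mono_neutral_right)
      show "UU D E \<subseteq> ?A" using DE by blast
      have gz: "g D E V = 0" if "V \<notin> UU D E" for V using g that unfolding good_def by blast
      show "\<forall>V\<in>?A - UU D E. g D E V * f B V W = 0" using gz by simp
    qed (rule fA)
    thus "(\<Sum>V\<in>?A. x B * y D * z E * (g D E V * f B V W)) = x B * y D * z E * (\<Sum>V\<in>UU D E. g D E V * f B V W)"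
      by (simp only: hA[symmetric] sum_distrib_left)
  qed
  finally show ?thesis .
qed

lemma assoc_frame:
  assumes x: "in_MMR x" and y: "in_MMR y" and z: "in_MMR z" and gL: "good gL" and gR: "good gR"
    and H: "\<And>B D E W. B \<in> MM \<Longrightarrow> D \<in> MM \<Longrightarrow> E \<in> MM \<Longrightarrow>
      (\<Sum>V\<in>UU B D. gL B D V * fL V E W) = (\<Sum>V\<in>UU D E. gR D E V * fR B V W)"
  shows "bilin fL (bilin gL x y) z = bilin fR x (bilin gR y z)"
proof
  fix W
  have s: "supp x \<subseteq> MM" "supp y \<subseteq> MM" "supp z \<subseteq> MM" using x y z by (auto simp: in_MMR_alt)
  show "bilin fL (bilin gL x y) z W = bilin fR x (bilin gR y z) W"
    unfolding bilin_left_expand[OF gL x y z] bilin_right_expand[OF gR x y z]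
    by (intro sum.cong refl arg_cong2[where f = "(*)"] H) (use s in auto)
qed

lemma bilin_add: "vadd (bilin f x y) (bilin g x y) = bilin (\<lambda>B D W. f B D W + g B D W) x y"
  by (simp add: vadd_def bilin_def sum.distrib distrib_left)
lemma bilin_smul: "vsmul q (bilin f x y) = bilin (\<lambda>B D W. q * f B D W) x y"
  by (simp add: vsmul_def bilin_def sum_distrib_left mult_ac)

lemma good_add: "good f \<Longrightarrow> good g \<Longrightarrow> good (\<lambda>B D W. f B D W + g B D W)"
  unfolding good_def
proof (intro allI impI)
  fix B D W assume gf: "\<forall>B D V. f B D V \<noteq> 0 \<longrightarrow> V \<in> UU B D" "\<forall>B D V. g B D V \<noteq> 0 \<longrightarrow> V \<in> UU B D"
    and "f B D W + g B D W \<noteq> 0"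
  then have "f B D W \<noteq> 0 \<or> g B D W \<noteq> 0" by auto
  thus "W \<in> UU B D" using gf by blast
qed
lemma good_smul: "good f \<Longrightarrow> good (\<lambda>B D W. q * f B D W)"
  unfolding good_def by auto
lemma good_coef_gen: "good (coef_gen cond ex q)"
  unfolding good_def
proof (intro allI impI)
  fix B D V assume "coef_gen cond ex q B D V \<noteq> 0"
  then have "admissible B D V (msize B + msize D) (Sset_I B D) \<or> admissible B D V (msize B + msize D - 1) (Sset_II B D)"
    unfolding coef_gen_def by (auto split: if_splits)
  thus "V \<in> UU B D" unfolding admissible_def UU_def by blast
qed


definition coef :: "nat \<Rightarrow> (nat set list \<Rightarrow> nat set list \<Rightarrow> nat set \<Rightarrow> bool) \<Rightarrow> (nat \<Rightarrow> nat) \<Rightarrow> 'k::field \<Rightarrow>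
   nat set list \<Rightarrow> nat set list \<Rightarrow> nat set list \<Rightarrow> 'k" where
  "coef e cond ex q B D W = (if admissible B D W (msize B + msize D - e) (Sg e (msize B) (msize D)) \<and>
      cond B W (Sg e (msize B) (msize D)) then q ^ ex (capn B W (Sg e (msize B) (msize D))) else 0)"

lemma coef_gen_split: "coef_gen cond ex q B D W = coef 0 cond ex q B D W + coef 1 cond ex q B D W"
proof -
  have "Sset_I B D = Sg 0 (msize B) (msize D)" "Sset_II B D = Sg 1 (msize B) (msize D)"
    by (simp_all add: Sset_I_def Sset_II_def Sg_def)
  thus ?thesis by (simp add: coef_gen_def coef_def)
qed


context trip begin

lemma UU_ab: "{V. Mperm n12 V} \<subseteq> UU a b"
  using e1 unfolding UU_def n12_def msa msb by (cases e1) auto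
lemma UU_bc: "{V. Mperm n23 V} \<subseteq> UU b c"
  using e2 unfolding UU_def n23_def msc msb by (cases e2) auto

lemma collapseL:
  "(\<Sum>V\<in>UU a b. coef e1 cg exg q a b V * coef e2 cf exf q V c W) =
   (if tri W \<and> cg a (V0 W) I2 \<and> cf (V0 W) W I3 then q ^ (exg (capn a (V0 W) I2) + exf (capn (V0 W) W I3)) else 0)"
proof -
  define h where "h V = (if tri W \<and> cg a V I2 \<and> cf V W (Sg e2 (msize V) n3)
     then q ^ (exg (capn a V I2) + exf (capn V W (Sg e2 (msize V) n3))) else 0)" for V
  have eq: "coef e1 cg exg q a b V * coef e2 cf exf q V c W = (if V = V0 W then h V else 0)" for V
  proof -
    have c1: "coef e1 cg exg q a b V = (if admissible a b V n12 I2 \<and> cg a V I2 then q ^ exg (capn a V I2) else 0)"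
      unfolding coef_def msa msb n12_def I2_def ..
    have c2: "coef e2 cf exf q V c W = (if admissible V c W (msize V + n3 - e2) (Sg e2 (msize V) n3) \<and> cf V W (Sg e2 (msize V) n3)
       then q ^ exf (capn V W (Sg e2 (msize V) n3)) else 0)"
      unfolding coef_def msc ..
    show ?thesis unfolding c1 c2 h_def using left_adm[of V W] by (auto simp: power_add)
  qed
  have "(\<Sum>V\<in>UU a b. coef e1 cg exg q a b V * coef e2 cf exf q V c W) = (if V0 W \<in> UU a b then h (V0 W) else 0)"
    unfolding eq by (simp add: sum.delta UU_fin)
  also have "\<dots> = h (V0 W)"
    using UU_ab V0_Mperm[OF tri_W] by (auto simp: h_def)
  also have "\<dots> = (if tri W \<and> cg a (V0 W) I2 \<and> cf (V0 W) W I3 then q ^ (exg (capn a (V0 W) I2) + exf (capn (V0 W) W I3)) else 0)"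
    unfolding h_def using msV0 by (auto simp: I3_def)
  finally show ?thesis .
qed

lemma msV1: "tri W \<Longrightarrow> msize (V1 W) = n23" by (intro msize_Mperm V1_Mperm tri_W)

lemma collapseR:
  "(\<Sum>V\<in>UU b c. coef e2 cg exg q b c V * coef e1 cf exf q a V W) =
   (if tri W \<and> cg b (V1 W) (Sg e2 n2 n3) \<and> cf a W J then q ^ (exg (capn b (V1 W) (Sg e2 n2 n3)) + exf (capn a W J)) else 0)"
proof -
  define h where "h V = (if tri W \<and> cg b V (Sg e2 n2 n3) \<and> cf a W (Sg e1 n1 (msize V))
     then q ^ (exg (capn b V (Sg e2 n2 n3)) + exf (capn a W (Sg e1 n1 (msize V)))) else 0)" for V
  have eq: "coef e2 cg exg q b c V * coef e1 cf exf q a V W = (if V = V1 W then h V else 0)" for V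
  proof -
    have c1: "coef e2 cg exg q b c V = (if admissible b c V n23 (Sg e2 n2 n3) \<and> cg b V (Sg e2 n2 n3) then q ^ exg (capn b V (Sg e2 n2 n3)) else 0)"
      unfolding coef_def msc msb n23_def ..
    have c2: "coef e1 cf exf q a V W = (if admissible a V W (n1 + msize V - e1) (Sg e1 n1 (msize V)) \<and> cf a W (Sg e1 n1 (msize V))
       then q ^ exf (capn a W (Sg e1 n1 (msize V))) else 0)"
      unfolding coef_def msa ..
    show ?thesis unfolding c1 c2 h_def using right_adm[of V W] by (auto simp: power_add)
  qed
  have "(\<Sum>V\<in>UU b c. coef e2 cg exg q b c V * coef e1 cf exf q a V W) = (if V1 W \<in> UU b c then h (V1 W) else 0)"
    unfolding eq by (simp add: sum.delta UU_fin)
  also have "\<dots> = h (V1 W)"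
    using UU_bc V1_Mperm[OF tri_W] by (auto simp: h_def)
  also have "\<dots> = (if tri W \<and> cg b (V1 W) (Sg e2 n2 n3) \<and> cf a W J then q ^ (exg (capn b (V1 W) (Sg e2 n2 n3)) + exf (capn a W J)) else 0)"
    unfolding h_def by (auto simp: msV1 J_def)
  finally show ?thesis .
qed

lemma pair_eq:
  assumes C: "\<And>W. tri W \<Longrightarrow> (cgL a (V0 W) I2 \<and> cfL (V0 W) W I3 \<longleftrightarrow> cgR b (V1 W) (Sg e2 n2 n3) \<and> cfR a W J)"
    and X: "\<And>W. tri W \<Longrightarrow> cgL a (V0 W) I2 \<Longrightarrow> cfL (V0 W) W I3 \<Longrightarrow>
      exgL (cnt W I1 I2) + exfL (cnt W (I1 \<union> I2) I3) = exgR (cnt W I2 I3) + exfR (cnt W I1 (I2 \<union> I3))"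
  shows "(\<Sum>V\<in>UU a b. coef e1 cgL exgL q a b V * coef e2 cfL exfL q V c W) =
         (\<Sum>V\<in>UU b c. coef e2 cgR exgR q b c V * coef e1 cfR exfR q a V W)"
  unfolding collapseL collapseR
  using C[of W] X[of W] by (auto simp: capL1 capL2 capR1 capR2)

lemma cov: "tri W \<Longrightarrow> last W \<inter> I1 \<noteq> {} \<or> last W \<inter> I2 \<noteq> {} \<or> last W \<inter> I3 \<noteq> {}"
  using tri_last[of W] by blast
lemma u12: "last W \<inter> (I1 \<union> I2) \<noteq> {} \<longleftrightarrow> last W \<inter> I1 \<noteq> {} \<or> last W \<inter> I2 \<noteq> {}" by blast
lemma u23: "last W \<inter> (I2 \<union> I3) \<noteq> {} \<longleftrightarrow> last W \<inter> I2 \<noteq> {} \<or> last W \<inter> I3 \<noteq> {}" by blast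
lemma pos12: "tri W \<Longrightarrow> last W \<inter> I1 \<noteq> {} \<Longrightarrow> last W \<inter> I2 \<noteq> {} \<Longrightarrow> 1 \<le> cnt W I1 I2"
  by (rule tri_cnt_pos)
lemma posA: "tri W \<Longrightarrow> last W \<inter> I1 \<noteq> {} \<or> last W \<inter> I2 \<noteq> {} \<Longrightarrow> last W \<inter> I3 \<noteq> {} \<Longrightarrow> 1 \<le> cnt W (I1 \<union> I2) I3"
  by (rule tri_cnt_pos) (auto simp: u12[symmetric])
lemma pos23: "tri W \<Longrightarrow> last W \<inter> I2 \<noteq> {} \<Longrightarrow> last W \<inter> I3 \<noteq> {} \<Longrightarrow> 1 \<le> cnt W I2 I3"
  by (rule tri_cnt_pos)
lemma posB: "tri W \<Longrightarrow> last W \<inter> I1 \<noteq> {} \<Longrightarrow> last W \<inter> I2 \<noteq> {} \<or> last W \<inter> I3 \<noteq> {} \<Longrightarrow> 1 \<le> cnt W I1 (I2 \<union> I3)"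
  by (rule tri_cnt_pos) (auto simp: u23[symmetric])
lemma ident: "cnt W I1 I2 + cnt W (I1 \<union> I2) I3 = cnt W I2 I3 + cnt W I1 (I2 \<union> I3)"
  by (rule cnt_ident)

lemmas cond_simps = condL_succ condL_prec condL_dot condLi_succ condLi_prec condLi_dot
  condR_succ condR_prec condR_dot condRi_succ condRi_prec condRi_dot u12 u23


lemma ax1: "(\<Sum>V\<in>UU a b. coef e1 cond_prec (\<lambda>c. c) q a b V * coef e2 cond_prec (\<lambda>c. c) q V c W) =
  (\<Sum>V\<in>UU b c. coef e2 (\<lambda>_ _ _. True) (\<lambda>c. c) q b c V * coef e1 cond_prec (\<lambda>c. c) q a V W)"
proof (rule pair_eq)
  fix W assume t: "tri W"
  show "cond_prec a (V0 W) I2 \<and> cond_prec (V0 W) W I3 \<longleftrightarrow> True \<and> cond_prec a W J"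
    using cov[OF t] t by (cases "last W \<inter> I1 = {}"; cases "last W \<inter> I2 = {}"; cases "last W \<inter> I3 = {}"; simp add: cond_simps)
  show "cnt W I1 I2 + cnt W (I1 \<union> I2) I3 = cnt W I2 I3 + cnt W I1 (I2 \<union> I3)" by (rule ident)
qed

lemma ax2: "(\<Sum>V\<in>UU a b. coef e1 cond_succ (\<lambda>c. c) q a b V * coef e2 cond_prec (\<lambda>c. c) q V c W) =
  (\<Sum>V\<in>UU b c. coef e2 cond_prec (\<lambda>c. c) q b c V * coef e1 cond_succ (\<lambda>c. c) q a V W)"
proof (rule pair_eq)
  fix W assume t: "tri W"
  show "cond_succ a (V0 W) I2 \<and> cond_prec (V0 W) W I3 \<longleftrightarrow> cond_prec b (V1 W) (Sg e2 n2 n3) \<and> cond_succ a W J"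
    using cov[OF t] t by (cases "last W \<inter> I1 = {}"; cases "last W \<inter> I2 = {}"; cases "last W \<inter> I3 = {}"; simp add: cond_simps)
next
  fix W assume t: "tri W" and h: "cond_succ a (V0 W) I2" "cond_prec (V0 W) W I3"
  show "(cnt W I1 I2) + (cnt W (I1 \<union> I2) I3) = (cnt W I2 I3) + (cnt W I1 (I2 \<union> I3))"
    using h ident[of W] pos12[OF t] posA[OF t] pos23[OF t] posB[OF t] cov[OF t] t by (cases "last W \<inter> I1 = {}"; cases "last W \<inter> I2 = {}"; cases "last W \<inter> I3 = {}"; auto simp: cond_simps)
qed

lemma ax3: "(\<Sum>V\<in>UU a b. coef e1 (\<lambda>_ _ _. True) (\<lambda>c. c) q a b V * coef e2 cond_succ (\<lambda>c. c) q V c W) =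
  (\<Sum>V\<in>UU b c. coef e2 cond_succ (\<lambda>c. c) q b c V * coef e1 cond_succ (\<lambda>c. c) q a V W)"
proof (rule pair_eq)
  fix W assume t: "tri W"
  show "True \<and> cond_succ (V0 W) W I3 \<longleftrightarrow> cond_succ b (V1 W) (Sg e2 n2 n3) \<and> cond_succ a W J"
    using cov[OF t] t by (cases "last W \<inter> I1 = {}"; cases "last W \<inter> I2 = {}"; cases "last W \<inter> I3 = {}"; simp add: cond_simps)
next
  fix W assume t: "tri W" and h: "True" "cond_succ (V0 W) W I3"
  show "(cnt W I1 I2) + (cnt W (I1 \<union> I2) I3) = (cnt W I2 I3) + (cnt W I1 (I2 \<union> I3))"
    using h ident[of W] pos12[OF t] posA[OF t] pos23[OF t] posB[OF t] cov[OF t] t by (cases "last W \<inter> I1 = {}"; cases "last W \<inter> I2 = {}"; cases "last W \<inter> I3 = {}"; auto simp: cond_simps)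
qed

lemma ax4: "(\<Sum>V\<in>UU a b. coef e1 cond_dot (\<lambda>c. c - 1) q a b V * coef e2 cond_dot (\<lambda>c. c - 1) q V c W) =
  (\<Sum>V\<in>UU b c. coef e2 cond_dot (\<lambda>c. c - 1) q b c V * coef e1 cond_dot (\<lambda>c. c - 1) q a V W)"
proof (rule pair_eq)
  fix W assume t: "tri W"
  show "cond_dot a (V0 W) I2 \<and> cond_dot (V0 W) W I3 \<longleftrightarrow> cond_dot b (V1 W) (Sg e2 n2 n3) \<and> cond_dot a W J"
    using cov[OF t] t by (cases "last W \<inter> I1 = {}"; cases "last W \<inter> I2 = {}"; cases "last W \<inter> I3 = {}"; simp add: cond_simps)
next
  fix W assume t: "tri W" and h: "cond_dot a (V0 W) I2" "cond_dot (V0 W) W I3"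
  show "(cnt W I1 I2 - 1) + (cnt W (I1 \<union> I2) I3 - 1) = (cnt W I2 I3 - 1) + (cnt W I1 (I2 \<union> I3) - 1)"
    using h ident[of W] pos12[OF t] posA[OF t] pos23[OF t] posB[OF t] cov[OF t] t by (cases "last W \<inter> I1 = {}"; cases "last W \<inter> I2 = {}"; cases "last W \<inter> I3 = {}"; auto simp: cond_simps)
qed

lemma ax5: "(\<Sum>V\<in>UU a b. coef e1 cond_succ (\<lambda>c. c) q a b V * coef e2 cond_dot (\<lambda>c. c - 1) q V c W) =
  (\<Sum>V\<in>UU b c. coef e2 cond_dot (\<lambda>c. c - 1) q b c V * coef e1 cond_succ (\<lambda>c. c) q a V W)"
proof (rule pair_eq)
  fix W assume t: "tri W"
  show "cond_succ a (V0 W) I2 \<and> cond_dot (V0 W) W I3 \<longleftrightarrow> cond_dot b (V1 W) (Sg e2 n2 n3) \<and> cond_succ a W J"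
    using cov[OF t] t by (cases "last W \<inter> I1 = {}"; cases "last W \<inter> I2 = {}"; cases "last W \<inter> I3 = {}"; simp add: cond_simps)
next
  fix W assume t: "tri W" and h: "cond_succ a (V0 W) I2" "cond_dot (V0 W) W I3"
  show "(cnt W I1 I2) + (cnt W (I1 \<union> I2) I3 - 1) = (cnt W I2 I3 - 1) + (cnt W I1 (I2 \<union> I3))"
    using h ident[of W] pos12[OF t] posA[OF t] pos23[OF t] posB[OF t] cov[OF t] t by (cases "last W \<inter> I1 = {}"; cases "last W \<inter> I2 = {}"; cases "last W \<inter> I3 = {}"; auto simp: cond_simps)
qed

lemma ax6: "(\<Sum>V\<in>UU a b. coef e1 cond_prec (\<lambda>c. c) q a b V * coef e2 cond_dot (\<lambda>c. c - 1) q V c W) =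
  (\<Sum>V\<in>UU b c. coef e2 cond_succ (\<lambda>c. c) q b c V * coef e1 cond_dot (\<lambda>c. c - 1) q a V W)"
proof (rule pair_eq)
  fix W assume t: "tri W"
  show "cond_prec a (V0 W) I2 \<and> cond_dot (V0 W) W I3 \<longleftrightarrow> cond_succ b (V1 W) (Sg e2 n2 n3) \<and> cond_dot a W J"
    using cov[OF t] t by (cases "last W \<inter> I1 = {}"; cases "last W \<inter> I2 = {}"; cases "last W \<inter> I3 = {}"; simp add: cond_simps)
next
  fix W assume t: "tri W" and h: "cond_prec a (V0 W) I2" "cond_dot (V0 W) W I3"
  show "(cnt W I1 I2) + (cnt W (I1 \<union> I2) I3 - 1) = (cnt W I2 I3) + (cnt W I1 (I2 \<union> I3) - 1)"
    using h ident[of W] pos12[OF t] posA[OF t] pos23[OF t] posB[OF t] cov[OF t] t by (cases "last W \<inter> I1 = {}"; cases "last W \<inter> I2 = {}"; cases "last W \<inter> I3 = {}"; auto simp: cond_simps)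
qed

lemma ax7: "(\<Sum>V\<in>UU a b. coef e1 cond_dot (\<lambda>c. c - 1) q a b V * coef e2 cond_prec (\<lambda>c. c) q V c W) =
  (\<Sum>V\<in>UU b c. coef e2 cond_prec (\<lambda>c. c) q b c V * coef e1 cond_dot (\<lambda>c. c - 1) q a V W)"
proof (rule pair_eq)
  fix W assume t: "tri W"
  show "cond_dot a (V0 W) I2 \<and> cond_prec (V0 W) W I3 \<longleftrightarrow> cond_prec b (V1 W) (Sg e2 n2 n3) \<and> cond_dot a W J"
    using cov[OF t] t by (cases "last W \<inter> I1 = {}"; cases "last W \<inter> I2 = {}"; cases "last W \<inter> I3 = {}"; simp add: cond_simps)
next
  fix W assume t: "tri W" and h: "cond_dot a (V0 W) I2" "cond_prec (V0 W) W I3"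
  show "(cnt W I1 I2 - 1) + (cnt W (I1 \<union> I2) I3) = (cnt W I2 I3) + (cnt W I1 (I2 \<union> I3) - 1)"
    using h ident[of W] pos12[OF t] posA[OF t] pos23[OF t] posB[OF t] cov[OF t] t by (cases "last W \<inter> I1 = {}"; cases "last W \<inter> I2 = {}"; cases "last W \<inter> I3 = {}"; auto simp: cond_simps)
qed

end


lemma MM_Mperm: "B \<in> MM \<Longrightarrow> Mperm (msize B) B"
  by (auto simp: MM_def msize_Mperm)

lemma coef_T:
  assumes B: "1 \<le> msize B" and D: "1 \<le> msize D" and e: "e \<le> 1"
  shows "coef e cond_prec (\<lambda>c. c) q B D V + coef e cond_succ (\<lambda>c. c) q B D V + q * coef e cond_dot (\<lambda>c. c - 1) q B D V
     = coef e (\<lambda>_ _ _. True) (\<lambda>c. c) q B D V"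
proof (cases "admissible B D V (msize B + msize D - e) (Sg e (msize B) (msize D))")
  case False thus ?thesis by (simp add: coef_def)
next
  case True
  define S where "S = Sg e (msize B) (msize D)"
  define X where "X = {1..msize B}"
  define N where "N = msize B + msize D - e"
  have V: "Mperm N V" using True by (simp add: admissible_def N_def)
  have N1: "1 \<le> N" using B D e unfolding N_def by linarith
  have lv: "last V \<noteq> {}" "last V \<subseteq> {1..N}" using Mperm_last[OF V N1] by auto
  have cov: "{1..N} \<subseteq> X \<union> S" unfolding X_def S_def N_def Sg_def by auto
  have nn: "V \<noteq> []" using Mperm_nonnil[OF V N1] .
  have X': "{Suc 0..msize B} = X" by (simp add: X_def)
  have cp: "capn B V S = cnt V X S" by (simp add: capn_cnt X_def)
  show ?thesis
  proof (cases "last V \<inter> X = {}")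
    case True
    then have "last V \<inter> S \<noteq> {}" using lv cov by blast
    thus ?thesis using True \<open>admissible B D V _ _\<close>
      by (simp add: coef_def cond_prec_def cond_succ_def cond_dot_def X_def[symmetric] X' S_def[symmetric] N_def[symmetric])
  next
    case False
    show ?thesis
    proof (cases "last V \<inter> S = {}")
      case True thus ?thesis using False \<open>admissible B D V _ _\<close>
        by (simp add: coef_def cond_prec_def cond_succ_def cond_dot_def X_def[symmetric] X' S_def[symmetric] N_def[symmetric])
    next
      case F2: False
      have "1 \<le> cnt V X S" using cnt_pos[OF nn] False F2 by blast
      then have "q * q ^ (cnt V X S - 1) = q ^ cnt V X S" by (metis Suc_diff_le diff_Suc_1 power_Suc)
      thus ?thesis using False F2 \<open>admissible B D V _ _\<close> cp
        by (simp add: coef_def cond_prec_def cond_succ_def cond_dot_def X_def[symmetric] X' S_def[symmetric] N_def[symmetric])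
    qed
  qed
qed

lemma coef_gen_T:
  assumes "B \<in> MM" "D \<in> MM"
  shows "coef_gen cond_prec (\<lambda>c. c) q B D V + coef_gen cond_succ (\<lambda>c. c) q B D V + q * coef_gen cond_dot (\<lambda>c. c - 1) q B D V
     = coef_gen (\<lambda>_ _ _. True) (\<lambda>c. c) q B D V"
  using coef_T[OF MM_size[OF assms(1)] MM_size[OF assms(2)], of 0 q V, simplified]
        coef_T[OF MM_size[OF assms(1)] MM_size[OF assms(2)], of 1 q V, simplified]
  by (simp add: coef_gen_split algebra_simps)

lemma frame4:
  assumes "\<And>e1 e2. e1 \<le> 1 \<Longrightarrow> e2 \<le> 1 \<Longrightarrow>
    (\<Sum>V\<in>UU B D. coef e1 gL exgL q B D V * coef e2 fL exfL q V E W) =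
    (\<Sum>V\<in>UU D E. coef e2 gR exgR q D E V * coef e1 fR exfR q B V W)"
  shows "(\<Sum>V\<in>UU B D. coef_gen gL exgL q B D V * coef_gen fL exfL q V E W) =
    (\<Sum>V\<in>UU D E. coef_gen gR exgR q D E V * coef_gen fR exfR q B V W)"
  using assms[of 0 0] assms[of 0 1] assms[of 1 0] assms[of 1 1]
  by (simp add: coef_gen_split distrib_left distrib_right sum.distrib add_ac)

lemma trip_MM: "B \<in> MM \<Longrightarrow> D \<in> MM \<Longrightarrow> E \<in> MM \<Longrightarrow> e1 \<le> 1 \<Longrightarrow> e2 \<le> 1 \<Longrightarrow>
  trip B D E (msize B) (msize D) (msize E) e1 e2"
  using MM_size[of B] MM_size[of D] MM_size[of E] by unfold_locales (auto intro: MM_Mperm)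

abbreviation "Cp q \<equiv> coef_gen cond_prec (\<lambda>c. c) q"
abbreviation "Cs q \<equiv> coef_gen cond_succ (\<lambda>c. c) q"
abbreviation "Cd q \<equiv> coef_gen cond_dot (\<lambda>c. c - 1) q"
abbreviation "CT q \<equiv> coef_gen (\<lambda>_ _ _. True) (\<lambda>c. c) q"
definition "CT' q = (\<lambda>B D W. Cp q B D W + Cs q B D W + q * Cd q B D W)"

lemma good_CT': "good (CT' q)"
  unfolding CT'_def by (intro good_add good_smul good_coef_gen)

lemma T_bilin: "vadd (vadd (prec_q q y z) (succ_q q y z)) (vsmul q (dot_q q y z)) = bilin (CT' q) y z"
  unfolding prec_q_def succ_q_def dot_q_def bilin_add bilin_smul CT'_def ..

lemma CT'_MM: "B \<in> MM \<Longrightarrow> D \<in> MM \<Longrightarrow> CT' q B D V = CT q B D V"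
  unfolding CT'_def by (rule coef_gen_T)

theorem proposition3p3:
  fixes q :: "'k::field"
  shows "(\<forall>x y. in_MMR x \<and> in_MMR y \<longrightarrow>
            in_MMR (succ_q q x y) \<and> in_MMR (dot_q q x y) \<and> in_MMR (prec_q q x y)) \<and>
         q_tridendriform q in_MMR vadd vsmul (prec_q q) (dot_q q) (succ_q q)"
proof (intro conjI allI impI)
  fix x y :: "nat set list \<Rightarrow> 'k" assume h: "in_MMR x \<and> in_MMR y"
  show "in_MMR (succ_q q x y)" "in_MMR (dot_q q x y)" "in_MMR (prec_q q x y)"
    unfolding succ_q_def dot_q_def prec_q_def using h by (auto intro: in_MMR_bilin good_coef_gen)
next
  show "q_tridendriform q in_MMR vadd vsmul (prec_q q) (dot_q q) (succ_q q)"
    unfolding q_tridendriform_def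
  proof (intro allI impI conjI)
    fix x y z :: "nat set list \<Rightarrow> 'k" assume "in_MMR x \<and> in_MMR y \<and> in_MMR z"
    then have x: "in_MMR x" and y: "in_MMR y" and z: "in_MMR z" by auto
    show "prec_q q (prec_q q x y) z = prec_q q x (vadd (vadd (prec_q q y z) (succ_q q y z)) (vsmul q (dot_q q y z)))"
      unfolding T_bilin unfolding prec_q_def
    proof (rule assoc_frame[OF x y z good_coef_gen good_CT'])
      fix B D E W assume M: "B \<in> MM" "D \<in> MM" "E \<in> MM"
      have "(\<Sum>V\<in>UU D E. CT' q D E V * Cp q B V W) = (\<Sum>V\<in>UU D E. CT q D E V * Cp q B V W)"
        using M by (simp add: CT'_MM)
      also have "(\<Sum>V\<in>UU B D. Cp q B D V * Cp q V E W) = \<dots>"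
        by (rule frame4) (rule trip.ax1[OF trip_MM[OF M]])
      finally show "(\<Sum>V\<in>UU B D. Cp q B D V * Cp q V E W) = (\<Sum>V\<in>UU D E. CT' q D E V * Cp q B V W)" .
    qed
    show "prec_q q (succ_q q x y) z = succ_q q x (prec_q q y z)"
      unfolding prec_q_def succ_q_def
      by (rule assoc_frame[OF x y z good_coef_gen good_coef_gen], rule frame4, rule trip.ax2[OF trip_MM])
    show "succ_q q (vadd (vadd (prec_q q x y) (succ_q q x y)) (vsmul q (dot_q q x y))) z = succ_q q x (succ_q q y z)"
      unfolding T_bilin unfolding succ_q_def
    proof (rule assoc_frame[OF x y z good_CT' good_coef_gen])
      fix B D E W assume M: "B \<in> MM" "D \<in> MM" "E \<in> MM"
      have "(\<Sum>V\<in>UU B D. CT' q B D V * Cs q V E W) = (\<Sum>V\<in>UU B D. CT q B D V * Cs q V E W)"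
        using M by (simp add: CT'_MM)
      also have "\<dots> = (\<Sum>V\<in>UU D E. Cs q D E V * Cs q B V W)"
        by (rule frame4) (rule trip.ax3[OF trip_MM[OF M]])
      finally show "(\<Sum>V\<in>UU B D. CT' q B D V * Cs q V E W) = (\<Sum>V\<in>UU D E. Cs q D E V * Cs q B V W)" .
    qed
    show "dot_q q (dot_q q x y) z = dot_q q x (dot_q q y z)"
      unfolding dot_q_def
      by (rule assoc_frame[OF x y z good_coef_gen good_coef_gen], rule frame4, rule trip.ax4[OF trip_MM])
    show "dot_q q (succ_q q x y) z = succ_q q x (dot_q q y z)"
      unfolding dot_q_def succ_q_def
      by (rule assoc_frame[OF x y z good_coef_gen good_coef_gen], rule frame4, rule trip.ax5[OF trip_MM])
    show "dot_q q (prec_q q x y) z = dot_q q x (succ_q q y z)"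
      unfolding dot_q_def succ_q_def prec_q_def
      by (rule assoc_frame[OF x y z good_coef_gen good_coef_gen], rule frame4, rule trip.ax6[OF trip_MM])
    show "prec_q q (dot_q q x y) z = dot_q q x (prec_q q y z)"
      unfolding dot_q_def prec_q_def
      by (rule assoc_frame[OF x y z good_coef_gen good_coef_gen], rule frame4, rule trip.ax7[OF trip_MM])
  qed
qed


end
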